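(* Let $n$ be a positive integer and $k$ an integer with $0\le k\le n$. Then $$e_k\left(\left\{\sin^2\left(\tfrac{(2j-1)\pi}{4n}\right) : j=1,\dots,n\right\}\right) = \frac{2n\,4^{-k}(2n-k-1)!}{k!\,(2n-2k)!}.$$
   Context: $e_k(\alpha_1,\dots,\alpha_n)$ denotes the degree-$k$ elementary symmetric function of $\alpha_1,\dots,\alpha_n$ (with $e_0=1$). *)

theory Defs
  imports Complex_Main
begin

definition esym :: "nat \<Rightarrow> 'i set \<Rightarrow> ('i \<Rightarrow> 'a::comm_ring_1) \<Rightarrow> 'a" where
  "esym k I x = (\<Sum>S\<in>{S. S \<subseteq> I \<and> card S = k}. \<Prod>i\<in>S. x i)"

end

theory Submission imports Defs "HOL-Computational_Algebra.Polynomial" begin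



lemma esym_0: "finite I \<Longrightarrow> esym 0 I x = 1"
proof -
  assume fin: "finite I"
  have "S = {}" if "S \<subseteq> I" "card S = 0" for S :: "'a set"
  proof -
    have "finite S" using finite_subset[OF that(1) fin] .
    then show ?thesis using that(2) by simp
  qed
  then have "{S. S \<subseteq> I \<and> card S = 0} = {{}}" by auto
  then show ?thesis unfolding esym_def by simp
qed

lemma esym_big: "finite I \<Longrightarrow> card I < k \<Longrightarrow> esym k I x = 0"
proof -
  assume fin: "finite I" and lt: "card I < k"
  have "\<not> (S \<subseteq> I \<and> card S = k)" for S
  proof
    assume h: "S \<subseteq> I \<and> card S = k"
    then have "card S \<le> card I" using card_mono[OF fin, of S] by simp
    then show False using lt h by simp
  qed
  then have e: "{S. S \<subseteq> I \<and> card S = k} = {}" by simp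
  show ?thesis unfolding esym_def e by simp
qed

lemma esym_insert:
  assumes "finite I" "a \<notin> I"
  shows "esym (Suc k) (insert a I) x = esym (Suc k) I x + x a * esym k I x"
proof -
  have inj: "inj_on (insert a) {S. S \<subseteq> I \<and> card S = k}"
    unfolding inj_on_def by (metis Diff_insert_absorb in_mono mem_Collect_eq assms(2))
  have eq: "{S. S \<subseteq> insert a I \<and> card S = Suc k} =
     {S. S \<subseteq> I \<and> card S = Suc k} \<union> insert a ` {S. S \<subseteq> I \<and> card S = k}"
  proof (intro equalityI subsetI)
    fix S assume "S \<in> {S. S \<subseteq> insert a I \<and> card S = Suc k}"
    then have S: "S \<subseteq> insert a I" "card S = Suc k" by auto
    have fS: "finite S" using S(1) assms(1) finite_subset by blast
    show "S \<in> {S. S \<subseteq> I \<and> card S = Suc k} \<union> insert a ` {S. S \<subseteq> I \<and> card S = k}"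
    proof (cases "a \<in> S")
      case True
      then have "S = insert a (S - {a})" by auto
      moreover have "S - {a} \<subseteq> I" "card (S - {a}) = k" using S True fS by auto
      ultimately show ?thesis by blast
    next
      case False
      then show ?thesis using S by auto
    qed
  next
    fix S assume "S \<in> {S. S \<subseteq> I \<and> card S = Suc k} \<union> insert a ` {S. S \<subseteq> I \<and> card S = k}"
    then show "S \<in> {S. S \<subseteq> insert a I \<and> card S = Suc k}"
    proof
      assume "S \<in> insert a ` {S. S \<subseteq> I \<and> card S = k}"
      then obtain T where T: "T \<subseteq> I" "card T = k" "S = insert a T" by auto
      have "finite T" using T(1) assms(1) finite_subset by blast
      moreover have "a \<notin> T" using T assms(2) by auto
      ultimately show ?thesis using T by auto
    qed auto
  qed
  have fin: "finite {S. S \<subseteq> I \<and> card S = j}" for j using assms(1) by auto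
  have disj: "{S. S \<subseteq> I \<and> card S = Suc k} \<inter> insert a ` {S. S \<subseteq> I \<and> card S = k} = {}"
    using assms(2) by auto
  have "esym (Suc k) (insert a I) x = esym (Suc k) I x + (\<Sum>S\<in>insert a ` {S. S \<subseteq> I \<and> card S = k}. prod x S)"
    unfolding esym_def eq by (rule sum.union_disjoint) (use fin disj in auto)
  also have "(\<Sum>S\<in>insert a ` {S. S \<subseteq> I \<and> card S = k}. prod x S) = (\<Sum>S\<in>{S. S \<subseteq> I \<and> card S = k}. prod x (insert a S))"
    by (rule sum.reindex[OF inj, unfolded comp_def])
  also have "\<dots> = (\<Sum>S\<in>{S. S \<subseteq> I \<and> card S = k}. x a * prod x S)"
  proof (rule sum.cong[OF refl])
    fix S assume "S \<in> {S. S \<subseteq> I \<and> card S = k}"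
    then have "finite S" "a \<notin> S" using assms finite_subset by auto
    then show "prod x (insert a S) = x a * prod x S" by simp
  qed
  also have "\<dots> = x a * esym k I x" unfolding esym_def by (simp add: sum_distrib_left)
  finally show ?thesis .
qed

lemma coeff_prod_linear:
  fixes x :: "'i \<Rightarrow> 'a::comm_ring_1"
  assumes "finite I"
  shows "coeff (\<Prod>j\<in>I. [:- x j, 1:]) m =
     (if m \<le> card I then (-1)^(card I - m) * esym (card I - m) I x else 0)"
  using assms
proof (induction I arbitrary: m rule: finite_induct)
  case empty
  then show ?case by (simp add: esym_0 coeff_1)
next
  case (insert a I)
  define N where "N = card I"
  define P where "P = (\<Prod>j\<in>I. [:- x j, 1:])"
  have cI: "card (insert a I) = Suc N" using insert N_def by simp
  have Q: "(\<Prod>j\<in>insert a I. [:- x j, 1:]) = [:- x a, 1:] * P"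
    using insert P_def by simp
  have cQ: "coeff ([:- x a, 1:] * P) m = (if m = 0 then 0 else coeff P (m - 1)) - x a * coeff P m"
    by (cases m) (simp_all add: algebra_simps)
  have IH: "coeff P j = (if j \<le> N then (-1)^(N - j) * esym (N - j) I x else 0)" for j
    using insert.IH N_def P_def by simp
  show ?case
    unfolding Q cQ cI
  proof (cases "m = 0")
    case True
    then show "(if m = 0 then 0 else coeff P (m - 1)) - x a * coeff P m =
      (if m \<le> Suc N then (- 1) ^ (Suc N - m) * esym (Suc N - m) (insert a I) x else 0)"
      using esym_insert[OF insert(1,2), of N x] esym_big[OF insert(1), of "Suc N" x] IH[of 0]
      by (simp add: N_def)
  next
    case False
    then obtain j where j: "m = Suc j" by (cases m) auto
    show "(if m = 0 then 0 else coeff P (m - 1)) - x a * coeff P m =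
      (if m \<le> Suc N then (- 1) ^ (Suc N - m) * esym (Suc N - m) (insert a I) x else 0)"
    proof (cases "m \<le> N")
      case True
      then have "Suc N - m = Suc (N - m)" "N - j = Suc (N - m)" using j by auto
      then show ?thesis using True j IH[of j] IH[of m] esym_insert[OF insert(1,2), of "N - m" x]
        by (simp add: algebra_simps)
    next
      case False
      then show ?thesis using j IH[of j] IH[of m] insert(1) esym_0[of I x] esym_0[of "insert a I" x] by auto
    qed
  qed
qed



definition Dc :: "nat \<Rightarrow> nat \<Rightarrow> real" where
  "Dc n m = (-4)^m * real ((n + m) choose (2*m))"

definition Dp :: "nat \<Rightarrow> real poly" where
  "Dp n = (\<Sum>m\<le>n. monom (Dc n m) m)"

lemma coeff_Dp: "coeff (Dp n) m = Dc n m"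
proof -
  have "coeff (Dp n) m = (\<Sum>i\<le>n. if i = m then Dc n i else 0)"
    unfolding Dp_def coeff_sum by simp
  also have "\<dots> = (if m \<le> n then Dc n m else 0)" by simp
  also have "\<dots> = Dc n m" by (simp add: Dc_def)
  finally show ?thesis .
qed

lemma degree_Dp: "degree (Dp n) \<le> n"
  unfolding Dp_def by (rule degree_sum_le) (auto intro: order.trans[OF degree_monom_le])

lemma binom_rec:
  "((A + 2) choose (2*j+2)) + (A choose (2*j+2)) = 2 * ((A + 1) choose (2*j+2)) + (A choose (2*j))"
proof -
  have e: "A + 2 = Suc (Suc A)" "A + 1 = Suc A" "2*j+2 = Suc (Suc (2*j))" by auto
  show ?thesis unfolding e by (simp add: binomial_Suc_Suc)
qed

lemma Dc_rec: "Dc (n+2) m = 2 * Dc (n+1) m - (if m = 0 then 0 else 4 * Dc (n+1) (m-1)) - Dc n m"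
proof (cases m)
  case 0
  then show ?thesis by (simp add: Dc_def)
next
  case (Suc j)
  have b: "real ((n + j + 1 + 2) choose (2*j+2)) + real ((n + j + 1) choose (2*j+2))
      = 2 * real ((n + j + 1 + 1) choose (2*j+2)) + real ((n + j + 1) choose (2*j))"
    using binom_rec[of "n+j+1" j] by (metis of_nat_add of_nat_mult of_nat_numeral)
  have e1: "n + 2 + m = n + j + 1 + 2" "2 * m = 2*j+2" "n + 1 + m = n + j + 1 + 1"
    "n + m = n + j + 1" "n + 1 + j = n + j + 1" using Suc by auto
  show ?thesis unfolding Dc_def e1 using Suc b
    by (simp add: algebra_simps e1)
qed

lemma Dp_rec: "Dp (n+2) = smult 2 (Dp (n+1)) - [:0, 4:] * Dp (n+1) - Dp n"
proof (rule poly_eqI)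
  fix m
  have c: "coeff ([:0, 4:] * p) m = (if m = 0 then 0 else 4 * coeff p (m - 1))" for p :: "real poly"
    by (cases m) simp_all
  show "coeff (Dp (n + 2)) m = coeff (smult 2 (Dp (n + 1)) - [:0, 4:] * Dp (n + 1) - Dp n) m"
    unfolding coeff_diff coeff_smult c coeff_Dp Dc_rec[of n m] by simp
qed

lemma Dp_trig: "poly (Dp n) ((sin t)^2) * cos t = cos ((2 * real n + 1) * t)"
proof -
  have "poly (Dp n) ((sin t)^2) * cos t = cos ((2 * real n + 1) * t) \<and>
        poly (Dp (Suc n)) ((sin t)^2) * cos t = cos ((2 * real (Suc n) + 1) * t)"
  proof (induction n)
    case 0
    have d0: "Dp 0 = 1" by (simp add: Dp_def Dc_def)
    have d1: "poly (Dp (Suc 0)) y = 1 - 4 * y" for y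
      by (simp add: Dp_def Dc_def poly_monom numeral_2_eq_2)
    have "cos (3 * t) = cos (2*t + t)" by simp
    also have "\<dots> = (1 - 4 * (sin t)^2) * cos t"
      unfolding cos_add cos_double sin_double
    proof -
      have h: "sin t ^ 2 + cos t ^ 2 = 1" by (rule sin_cos_squared_add)
      show "(cos t ^ 2 - sin t ^ 2) * cos t - 2 * sin t * cos t * sin t = (1 - 4 * (sin t)^2) * cos t"
        using h by algebra
    qed
    finally show ?case by (simp add: d0 d1)
  next
    case (Suc n)
    have "poly (Dp (Suc (Suc n))) ((sin t)^2) * cos t =
        2 * (1 - 2 * (sin t)^2) * (poly (Dp (Suc n)) ((sin t)^2) * cos t) - poly (Dp n) ((sin t)^2) * cos t"
    proof -
      have r: "poly (Dp (Suc (Suc n))) y = 2 * poly (Dp (Suc n)) y - 4 * y * poly (Dp (Suc n)) y - poly (Dp n) y" for y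
        using arg_cong[OF Dp_rec[of n], of "\<lambda>p. poly p y"] by (simp add: numeral_2_eq_2)
      show ?thesis unfolding r by (simp add: algebra_simps)
    qed
    also have "\<dots> = 2 * cos (2*t) * cos ((2 * real n + 3) * t) - cos ((2 * real n + 1) * t)"
      using Suc.IH unfolding cos_double_sin by (simp add: algebra_simps)
    also have "\<dots> = cos ((2 * real n + 5) * t)"
    proof -
      have "cos ((2 * real n + 5) * t) = cos ((2 * real n + 3) * t + 2*t)"
        by (simp add: algebra_simps)
      moreover have "cos ((2 * real n + 1) * t) = cos ((2 * real n + 3) * t - 2*t)"
        by (simp add: algebra_simps)
      ultimately show ?thesis unfolding cos_add cos_diff by simp
    qed
    finally show ?case using Suc.IH by (simp add: algebra_simps)
  qed
  then show ?thesis by simp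
qed



lemma fin_ident:
  assumes "k \<le> n" "1 \<le> n"
  shows "real ((2*n - k) choose (2*n - 2*k)) + real ((2*n - k - 1) choose (2*n - 2*k))
     = 2 * real n * fact (2*n - k - 1) / (fact k * fact (2*n - 2*k))"
proof (cases "k = 0")
  case True
  have f: "fact (2*n) = (real (2*n) * fact (2*n - 1) :: real)"
    using fact_reduce[of "2*n"] assms by simp
  show ?thesis using True assms by (simp add: f)
next
  case False
  have b1: "real ((2*n - k) choose (2*n - 2*k)) = fact (2*n-k) / (fact (2*n-2*k) * fact k)"
  proof -
    have "2*n-2*k \<le> 2*n-k" "2*n-k-(2*n-2*k) = k" using assms by auto
    then show ?thesis using binomial_fact[of "2*n-2*k" "2*n-k"] by simp
  qed
  have e2: "2*n - k - 1 - (2*n - 2*k) = k - 1" using assms False by simp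
  have b2: "real ((2*n - k - 1) choose (2*n - 2*k)) = fact (2*n-k-1) / (fact (2*n-2*k) * fact (k-1))"
  proof -
    have "2*n-2*k \<le> 2*n-k-1" using assms False by auto
    then show ?thesis using binomial_fact[of "2*n-2*k" "2*n-k-1"] e2 by simp
  qed
  have f1: "fact (2*n-k) = (real (2*n-k) * fact (2*n - k - 1) :: real)"
    by (rule fact_reduce) (use assms in simp)
  have f2: "fact k = (real k * fact (k - 1) :: real)"
    by (rule fact_reduce) (use False in simp)
  have r: "real (2*n-k) = 2 * real n - real k" using assms by simp
  show ?thesis unfolding b1 b2 f1 f2 r using False
    by (simp add: field_simps)
qed

theorem mainTheorem6:
  fixes n k :: nat
  assumes "n \<ge> 1" and "k \<le> n"
  shows "esym k {1..n} (\<lambda>j. (sin ((2 * real j - 1) * pi / (4 * real n)))\<^sup>2)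
         = 2 * real n * (1/4) ^ k * fact (2*n - k - 1) / (fact k * fact (2*n - 2*k))"
proof -
  define th where "th j = (2 * real j - 1) * pi / (4 * real n)" for j :: nat
  define x where "x j = (sin (th j))\<^sup>2" for j
  have xdef: "(\<lambda>j. (sin ((2 * real j - 1) * pi / (4 * real n)))\<^sup>2) = x"
    by (simp add: x_def th_def fun_eq_iff)
  have npos: "real n > 0" using assms by simp
  have th_pos: "0 < th j" if "j \<in> {1..n}" for j
    using that npos by (auto simp: th_def intro!: divide_pos_pos mult_pos_pos)
  have th_lt: "th j < pi/2" if "j \<in> {1..n}" for j
  proof -
    have "2 * real j - 1 < 2 * real n" using that by auto
    then have "(2 * real j - 1) * pi < (2 * real n) * pi" by simp
    then show ?thesis using npos by (simp add: th_def field_simps)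
  qed
  have cos_pos: "cos (th j) > 0" if "j \<in> {1..n}" for j
    using th_pos[OF that] th_lt[OF that] by (intro cos_gt_zero_pi) auto
  have cos_2n: "cos (2 * real n * th j) = 0" if "j \<in> {1..n}" for j
  proof -
    have "2 * real n * th j = real (2*j - 1) * (pi/2)"
      using that npos by (simp add: th_def of_nat_diff field_simps)
    moreover have "odd (2*j - 1)" using that by auto
    ultimately show ?thesis unfolding cos_zero_iff by blast
  qed
  define P where "P = Dp n + Dp (n - 1)"
  have P_root: "poly P (x j) = 0" if "j \<in> {1..n}" for j
  proof -
    have "poly P (x j) * cos (th j) = cos ((2 * real n + 1) * th j) + cos ((2 * real (n-1) + 1) * th j)"
      unfolding P_def x_def using Dp_trig[of n "th j"] Dp_trig[of "n-1" "th j"]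
      by (simp add: algebra_simps)
    also have "(2 * real (n-1) + 1) * th j = 2 * real n * th j - th j"
      using assms by (simp add: of_nat_diff algebra_simps)
    also have "(2 * real n + 1) * th j = 2 * real n * th j + th j"
      by (simp add: algebra_simps)
    also have "cos (2 * real n * th j + th j) + cos (2 * real n * th j - th j) = 0"
      unfolding cos_add cos_diff using cos_2n[OF that] by simp
    finally show ?thesis using cos_pos[OF that] by simp
  qed
  have mono: "x i < x j" if "i \<in> {1..n}" "j \<in> {1..n}" "i < j" for i j
  proof -
    have "th i < th j" using that npos by (simp add: th_def divide_strict_right_mono)
    then have "sin (th i) < sin (th j)"
      using th_pos[OF that(1)] th_lt[OF that(1)] th_pos[OF that(2)] th_lt[OF that(2)]
      by (subst sin_mono_less_eq) auto
    moreover have "0 \<le> sin (th i)" using th_pos[OF that(1)] th_lt[OF that(1)]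
      by (intro sin_ge_zero) auto
    ultimately show ?thesis unfolding x_def by (intro power_strict_mono) auto
  qed
  have inj: "inj_on x {1..n}"
  proof (rule inj_onI)
    fix i j assume "i \<in> {1..n}" "j \<in> {1..n}" "x i = x j"
    then show "i = j" using mono by (metis less_irrefl linorder_neqE_nat)
  qed
  define Q where "Q = smult ((-4)^n) (\<Prod>j\<in>{1..n}. [:- x j, 1:])"
  have cQ: "coeff Q m = (-4)^n * (if m \<le> n then (-1)^(n - m) * esym (n - m) {1..n} x else 0)" for m
    unfolding Q_def coeff_smult coeff_prod_linear[OF finite_atLeastAtMost] by simp
  have cP: "coeff P m = Dc n m + Dc (n-1) m" for m
    unfolding P_def by (simp add: coeff_Dp)
  have "P = Q"
  proof (rule poly_eqI_degree_lead_coeff[of P n Q "x ` {1..n}"])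
    show "coeff P n = coeff Q n"
    proof -
      have "n - 1 + n < 2 * n" using assms by simp
      then have "Dc (n-1) n = 0" by (simp add: Dc_def)
      moreover have "Dc n n = (-4)^n" by (simp add: Dc_def mult_2)
      ultimately show ?thesis unfolding cP cQ by (simp add: esym_0)
    qed
    show "n \<le> card (x ` {1..n})" using card_image[OF inj] by simp
    show "degree P \<le> n" unfolding P_def
      by (rule degree_add_le) (use degree_Dp[of n] degree_Dp[of "n-1"] in auto)
    show "degree Q \<le> n" by (rule degree_le) (simp add: cQ)
    show "poly P z = poly Q z" if "z \<in> x ` {1..n}" for z
    proof -
      from that obtain j where j: "j \<in> {1..n}" "z = x j" by auto
      have "poly Q z = (-4)^n * (\<Prod>i\<in>{1..n}. z - x i)" unfolding Q_def by (simp add: poly_prod)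
      also have "(\<Prod>i\<in>{1..n}. z - x i) = 0" by (rule prod_zero) (use j in auto)
      finally have "poly Q z = 0" by simp
      then show ?thesis using P_root[OF j(1)] j by simp
    qed
  qed
  then have "coeff P (n - k) = coeff Q (n - k)" by simp
  then have eq: "(-4)^(n-k) * (real ((2*n - k) choose (2*n - 2*k)) + real ((2*n - k - 1) choose (2*n - 2*k)))
      = (-4)^n * ((-1)^k * esym k {1..n} x)"
  proof -
    have e: "n + (n - k) = 2*n - k" "n - 1 + (n - k) = 2*n - k - 1" "2 * (n - k) = 2*n - 2*k" "n - (n - k) = k"
      using assms by auto
    assume "coeff P (n - k) = coeff Q (n - k)"
    then show ?thesis unfolding cP cQ Dc_def e by (simp add: algebra_simps)
  qed
  define S where "S = real ((2*n - k) choose (2*n - 2*k)) + real ((2*n - k - 1) choose (2*n - 2*k))"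
  define E where "E = esym k {1..n} x"
  have h1: "(-4::real)^n = (-4)^(n-k) * (-4)^k"
    using assms by (simp add: power_add[symmetric])
  have h2: "(-4::real)^k * (-1)^k = 4^k"
    by (simp add: power_mult_distrib[symmetric])
  have "(-4::real)^(n-k) * S = (-4)^n * ((-1)^k * E)" using eq unfolding S_def E_def .
  also have "\<dots> = (-4)^(n-k) * (((-4)^k * (-1)^k) * E)" unfolding h1 by (simp only: mult_ac)
  also have "\<dots> = (-4)^(n-k) * (4^k * E)" unfolding h2 ..
  finally have "S = 4^k * E" by simp
  then have "real ((2*n - k) choose (2*n - 2*k)) + real ((2*n - k - 1) choose (2*n - 2*k))
      = 4^k * esym k {1..n} x" unfolding S_def E_def .
  then have "esym k {1..n} x = (1/4)^k * (real ((2*n - k) choose (2*n - 2*k)) + real ((2*n - k - 1) choose (2*n - 2*k)))"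
    by (simp add: power_one_over field_simps)
  also have "\<dots> = 2 * real n * (1/4) ^ k * fact (2*n - k - 1) / (fact k * fact (2*n - 2*k))"
    unfolding fin_ident[OF assms(2,1)] by simp
  finally show ?thesis unfolding xdef .
qed

end
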